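(* Let $G$ be a graph with no isolated vertices. For every integer $\ell$ with $\gamma_t(G)\le \ell \le \gamma_{\rm gr}^t(G)$ there is a total dominating sequence of $G$ of length $\ell$.
   Context: $\gamma_t(G)$ is the minimum size of a set $D$ such that every vertex of $G$ has a neighbor in $D$. $N(v)$ denotes the open neighborhood of $v$. A sequence $S=(v_1,\ldots,v_k)$ of distinct vertices is a legal sequence if $N(v_i)\setminus \bigcup_{j=1}^{i-1} N(v_j)\neq\emptyset$ for every $i\in\{2,\ldots,k\}$, and a total dominating sequence if moreover $\{v_1,\ldots,v_k\}$ is a total dominating set of $G$. $\gamma_{\rm gr}^t(G)$ is the maximum length of a total dominating sequence of $G$. *)

theory Defs
  imports Main
begin

definition graph :: "'a set \<Rightarrow> ('a \<Rightarrow> 'a \<Rightarrow> bool) \<Rightarrow> bool" where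
  "graph V E \<longleftrightarrow> finite V \<and> (\<forall>u v. E u v \<longrightarrow> u \<in> V \<and> v \<in> V)
     \<and> (\<forall>u v. E u v \<longrightarrow> E v u) \<and> (\<forall>v. \<not> E v v)"

definition no_isolated :: "'a set \<Rightarrow> ('a \<Rightarrow> 'a \<Rightarrow> bool) \<Rightarrow> bool" where
  "no_isolated V E \<longleftrightarrow> (\<forall>v\<in>V. \<exists>u\<in>V. E v u)"

definition nbhd :: "'a set \<Rightarrow> ('a \<Rightarrow> 'a \<Rightarrow> bool) \<Rightarrow> 'a \<Rightarrow> 'a set" where
  "nbhd V E v = {u \<in> V. E v u}"

definition total_dominating_set :: "'a set \<Rightarrow> ('a \<Rightarrow> 'a \<Rightarrow> bool) \<Rightarrow> 'a set \<Rightarrow> bool" where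
  "total_dominating_set V E D \<longleftrightarrow> D \<subseteq> V \<and> (\<forall>v\<in>V. \<exists>d\<in>D. E v d)"

definition gamma_t :: "'a set \<Rightarrow> ('a \<Rightarrow> 'a \<Rightarrow> bool) \<Rightarrow> nat" where
  "gamma_t V E = Min {card D | D. total_dominating_set V E D}"

definition legal_sequence :: "'a set \<Rightarrow> ('a \<Rightarrow> 'a \<Rightarrow> bool) \<Rightarrow> 'a list \<Rightarrow> bool" where
  "legal_sequence V E S \<longleftrightarrow> distinct S \<and> set S \<subseteq> V \<and>
     (\<forall>i. 1 \<le> i \<and> i < length S \<longrightarrow>
        nbhd V E (S ! i) - (\<Union>j<i. nbhd V E (S ! j)) \<noteq> {})"

definition total_dominating_sequence :: "'a set \<Rightarrow> ('a \<Rightarrow> 'a \<Rightarrow> bool) \<Rightarrow> 'a list \<Rightarrow> bool" where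
  "total_dominating_sequence V E S \<longleftrightarrow>
     legal_sequence V E S \<and> total_dominating_set V E (set S)"

definition gamma_gr_t :: "'a set \<Rightarrow> ('a \<Rightarrow> 'a \<Rightarrow> bool) \<Rightarrow> nat" where
  "gamma_gr_t V E = Max {length S | S. total_dominating_sequence V E S}"

end

theory Submission
  imports Defs
begin

fun greedy :: "('a \<Rightarrow> 'a set) \<Rightarrow> 'a set \<Rightarrow> 'a list \<Rightarrow> 'a list" where
  "greedy N X [] = []"
| "greedy N X (d # ds) = (if N d \<subseteq> X then greedy N X ds else d # greedy N (X \<union> N d) ds)"

lemma greedy_len_mono: "X \<subseteq> Y \<Longrightarrow> length (greedy N Y ds) \<le> length (greedy N X ds)"
proof (induction ds arbitrary: X Y)
  case Nil then show ?case by simp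
next
  case (Cons d ds)
  show ?case
  proof (cases "N d \<subseteq> Y")
    case True
    then show ?thesis using Cons.IH[of X Y] Cons.IH[of "X \<union> N d" Y] Cons.prems
      by (auto simp: le_SucI)
  next
    case False
    then have "\<not> N d \<subseteq> X" using Cons.prems by auto
    then show ?thesis using False Cons.IH[of "X \<union> N d" "Y \<union> N d"] Cons.prems by auto
  qed
qed

lemma greedy_len: "length (greedy N X ds) \<le> length ds"
  by (induction ds arbitrary: X) (auto simp: le_SucI)

lemma greedy_set: "set (greedy N X ds) \<subseteq> set ds"
  by (induction ds arbitrary: X) auto

lemma greedy_new: "d \<in> set (greedy N X ds) \<Longrightarrow> \<not> N d \<subseteq> X"
  by (induction ds arbitrary: X) (auto split: if_splits)

lemma greedy_distinct: "distinct (greedy N X ds)"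
  by (induction ds arbitrary: X) (auto dest: greedy_new)

lemma greedy_cover: "d \<in> set ds \<Longrightarrow> N d \<subseteq> X \<union> \<Union>(N ` set (greedy N X ds))"
proof (induction ds arbitrary: X)
  case Nil then show ?case by simp
next
  case (Cons a ds)
  show ?case
  proof (cases "d = a")
    case True then show ?thesis by auto
  next
    case False
    then have "d \<in> set ds" using Cons.prems by simp
    then show ?thesis using Cons.IH[of X] Cons.IH[of "X \<union> N a"] by auto
  qed
qed

lemma greedy_legal: "k < length (greedy N X ds) \<Longrightarrow>
   \<not> N (greedy N X ds ! k) \<subseteq> X \<union> \<Union>(N ` set (take k (greedy N X ds)))"
proof (induction ds arbitrary: X k)
  case Nil then show ?case by simp
next
  case (Cons d ds)
  show ?case
  proof (cases "N d \<subseteq> X")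
    case True then show ?thesis using Cons by simp
  next
    case False
    show ?thesis
    proof (cases k)
      case 0 then show ?thesis using False by simp
    next
      case (Suc k')
      then have "k' < length (greedy N (X \<union> N d) ds)" using Cons.prems False by simp
      from Cons.IH[OF this] show ?thesis using False Suc by auto
    qed
  qed
qed

lemma UN_take: "i \<le> length L \<Longrightarrow> (\<Union>j<i. f (L ! j)) = \<Union>(f ` set (take i L))"
proof -
  assume "i \<le> length L"
  then have "set (take i L) = (!) L ` {0..<i}" by (simp add: nth_image)
  then show ?thesis by (simp add: lessThan_atLeast0)
qed

lemma legal_alt: "legal_sequence V E L \<longleftrightarrow> distinct L \<and> set L \<subseteq> V \<and>
  (\<forall>i. 1 \<le> i \<and> i < length L \<longrightarrow> nbhd V E (L ! i) - \<Union>(nbhd V E ` set (take i L)) \<noteq> {})"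
proof -
  have h: "i < length L \<Longrightarrow> (\<Union>j<i. nbhd V E (L!j)) = \<Union>(nbhd V E ` set (take i L))" for i
    using UN_take[of i L "nbhd V E"] by simp
  have "(\<forall>i. 1 \<le> i \<and> i < length L \<longrightarrow> nbhd V E (L!i) - (\<Union>j<i. nbhd V E (L!j)) \<noteq> {}) \<longleftrightarrow>
        (\<forall>i. 1 \<le> i \<and> i < length L \<longrightarrow> nbhd V E (L!i) - \<Union>(nbhd V E ` set (take i L)) \<noteq> {})"
    using h by auto
  then show ?thesis unfolding legal_sequence_def by (simp only:)
qed

lemma combo:
  assumes g: "graph V E" and D: "total_dominating_set V E D" and ds: "set ds = D"
    and S: "legal_sequence V E S"
  shows "total_dominating_sequence V E
     (take i S @ greedy (nbhd V E) (\<Union>(nbhd V E ` set (take i S))) ds)"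
    (is "total_dominating_sequence V E (?P @ ?G)")
proof -
  let ?N = "nbhd V E"
  let ?X = "\<Union>(?N ` set ?P)"
  have SV: "distinct S" "set S \<subseteq> V" and Sl: "\<And>i. 1 \<le> i \<Longrightarrow> i < length S \<Longrightarrow>
     ?N (S ! i) - \<Union>(?N ` set (take i S)) \<noteq> {}" using S unfolding legal_alt by auto
  have DV: "D \<subseteq> V" using D unfolding total_dominating_set_def by auto
  have dist: "distinct (?P @ ?G)"
  proof -
    have "distinct ?P" using SV by simp
    moreover have "distinct ?G" by (rule greedy_distinct)
    moreover have "set ?P \<inter> set ?G = {}"
    proof (rule ccontr)
      assume "set ?P \<inter> set ?G \<noteq> {}"
      then obtain d where "d \<in> set ?P" "d \<in> set ?G" by auto
      then show False using greedy_new[of d ?N ?X ds] by auto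
    qed
    ultimately show ?thesis by simp
  qed
  have setV: "set (?P @ ?G) \<subseteq> V"
    using SV greedy_set[of ?N ?X ds] ds DV set_take_subset[of i S] by auto
  have leg: "\<forall>m. 1 \<le> m \<and> m < length (?P @ ?G) \<longrightarrow>
     ?N ((?P @ ?G) ! m) - \<Union>(?N ` set (take m (?P @ ?G))) \<noteq> {}"
  proof (intro allI impI)
    fix m assume m: "1 \<le> m \<and> m < length (?P @ ?G)"
    show "?N ((?P @ ?G) ! m) - \<Union>(?N ` set (take m (?P @ ?G))) \<noteq> {}"
    proof (cases "m < length ?P")
      case True
      then have mi: "m < i" "m < length S" by auto
      then have "(?P @ ?G) ! m = S ! m" "take m (?P @ ?G) = take m S"
        using True by (simp_all add: nth_append take_take min_def)
      then show ?thesis using Sl[of m] m True by auto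
    next
      case False
      define k where "k = m - length ?P"
      have k: "m = length ?P + k" using False unfolding k_def by (simp only: not_less le_add_diff_inverse)
      then have "(?P @ ?G) ! m = ?G ! k" "take m (?P @ ?G) = ?P @ take k ?G"
        by (auto simp: nth_append min_def)
      moreover have "k < length ?G" using k m by simp
      ultimately show ?thesis using greedy_legal[of k ?N ?X ds] by auto
    qed
  qed
  have tds: "total_dominating_set V E (set (?P @ ?G))"
    unfolding total_dominating_set_def
  proof (intro conjI ballI)
    show "set (?P @ ?G) \<subseteq> V" by (rule setV)
    fix v assume v: "v \<in> V"
    then obtain d where d: "d \<in> D" "E v d" using D unfolding total_dominating_set_def by auto
    then have "v \<in> ?N d" using g v unfolding graph_def nbhd_def by auto
    then have "v \<in> ?X \<union> \<Union>(?N ` set ?G)" using greedy_cover[of d ds ?N ?X] d ds by auto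
    then obtain d' where d': "d' \<in> set (?P @ ?G)" "v \<in> ?N d'" by auto
    then have "E v d'" using g unfolding graph_def nbhd_def by auto
    then show "\<exists>d\<in>set (?P @ ?G). E v d" using d'(1) by blast
  qed
  show ?thesis unfolding total_dominating_sequence_def legal_alt using dist setV leg tds by blast
qed

lemma nat_ivt:
  fixes f :: "nat \<Rightarrow> nat"
  assumes "\<And>i. f (Suc i) \<le> Suc (f i)" "f 0 \<le> l" "l \<le> f k"
  shows "\<exists>i\<le>k. f i = l"
  using assms(3)
proof (induction k)
  case 0 then show ?case using assms(2) by auto
next
  case (Suc k)
  show ?case
  proof (cases "l \<le> f k")
    case True then show ?thesis using Suc.IH[OF True] by (auto intro: le_SucI)
  next
    case False
    then have "f (Suc k) = l" using Suc.prems assms(1)[of k] by linarith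
    then show ?thesis by blast
  qed
qed

theorem mainTheorem17:
  fixes V :: "'a set" and E :: "'a \<Rightarrow> 'a \<Rightarrow> bool" and l :: nat
  assumes "graph V E"
    and "no_isolated V E"
    and "gamma_t V E \<le> l" and "l \<le> gamma_gr_t V E"
  shows "\<exists>S. total_dominating_sequence V E S \<and> length S = l"
proof -
  let ?N = "nbhd V E"
  have fin: "finite V" using assms(1) unfolding graph_def by auto
  have VT: "total_dominating_set V E V" using assms(2) unfolding no_isolated_def total_dominating_set_def
    using assms(1) unfolding graph_def by blast
  have fT: "finite {card D | D. total_dominating_set V E D}"
  proof -
    have "{card D | D. total_dominating_set V E D} \<subseteq> card ` Pow V"
      unfolding total_dominating_set_def by auto
    then show ?thesis using fin finite_subset by blast
  qed
  have "gamma_t V E \<in> {card D | D. total_dominating_set V E D}"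
    unfolding gamma_t_def using fT VT by (intro Min_in) auto
  then obtain D where D: "total_dominating_set V E D" "card D = gamma_t V E" by auto
  have "finite D" using D fin finite_subset unfolding total_dominating_set_def by blast
  then obtain ds where ds: "set ds = D" "distinct ds" using finite_distinct_list by blast
  have lenD: "length ds = gamma_t V E" using distinct_card[OF ds(2)] ds(1) D(2) by simp
  have nil: "legal_sequence V E []" unfolding legal_sequence_def by simp
  have s0: "total_dominating_sequence V E (greedy ?N {} ds)"
    using combo[OF assms(1) D(1) ds(1) nil, of 0] by simp
  have fG: "finite {length S | S. total_dominating_sequence V E S}"
  proof -
    have "{length S | S. total_dominating_sequence V E S} \<subseteq> {..card V}"
    proof
      fix n assume "n \<in> {length S | S. total_dominating_sequence V E S}"
      then obtain S where "total_dominating_sequence V E S" "n = length S" by auto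
      then have "distinct S" "set S \<subseteq> V"
        unfolding total_dominating_sequence_def legal_sequence_def by auto
      then show "n \<in> {..card V}" using \<open>n = length S\<close> fin
        using card_mono[OF fin \<open>set S \<subseteq> V\<close>] distinct_card[OF \<open>distinct S\<close>] by simp
    qed
    then show ?thesis using finite_subset by blast
  qed
  have "gamma_gr_t V E \<in> {length S | S. total_dominating_sequence V E S}"
    unfolding gamma_gr_t_def using fG s0 by (intro Max_in) auto
  then obtain S where S: "total_dominating_sequence V E S" "length S = gamma_gr_t V E" by auto
  have SL: "legal_sequence V E S" using S unfolding total_dominating_sequence_def by auto
  define f where "f i = i + length (greedy ?N (\<Union>(?N ` set (take i S))) ds)" for i
  have step: "f (Suc i) \<le> Suc (f i)" for i
  proof -
    have "set (take i S) \<subseteq> set (take (Suc i) S)" by (simp add: set_take_subset_set_take)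
    then have "\<Union>(?N ` set (take i S)) \<subseteq> \<Union>(?N ` set (take (Suc i) S))" by auto
    from greedy_len_mono[OF this] show ?thesis unfolding f_def by simp
  qed
  have f0: "f 0 \<le> l" unfolding f_def using greedy_len[of ?N "{}" ds] lenD assms(3) by simp
  have fk: "l \<le> f (length S)" unfolding f_def using S assms(4) by simp
  obtain i where "f i = l" using nat_ivt[OF step f0 fk] by blast
  moreover have "f i = length (take i S @ greedy ?N (\<Union>(?N ` set (take i S))) ds)"
  proof -
    have "i \<le> length S"
    proof (rule ccontr)
      assume "\<not> i \<le> length S"
      then have "f i > f (length S)" unfolding f_def by simp
      then show False using fk \<open>f i = l\<close> by simp
    qed
    then show ?thesis unfolding f_def by simp
  qed
  ultimately have "length (take i S @ greedy ?N (\<Union>(?N ` set (take i S))) ds) = l" by simp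
  with combo[OF assms(1) D(1) ds(1) SL, of i] show ?thesis by blast
qed

end
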